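(* Let $m$ be a given positive integer and let $f:C(\mathbb{R}^{n})\rightarrow\mathbb{R}$ be a distribution of the form $f = \sum_{k = 1}^{m}a_{k}\delta_{x_{k}}$, with $x_{i}\in\mathbb{R}^{n}$, $a_{i}\in\mathbb{R}\setminus\{0\}$, $1\leq i\leq m$, such that $x_{i}\neq x_{j}$ and $a_{i}\neq a_{j}$ whenever $i\neq j$. Assume that the spherical mean transform of $f$ is given at $\frac{1}{2}(n\cdot m(m - 1) + 2n + 2)$ points such that there is no hyperplane in $\mathbb{R}^{n}$ which contains more than $n$ of these given points. Then the points $x_{1},\dots,x_{m}$ and the amplitudes $a_{1},\dots,a_{m}$ can be uniquely recovered.
   Context: $C(\mathbb{R}^{n})$ denotes the continuous real functions on $\mathbb{R}^{n}$, $C(\mathbb{R}^{+})$ the continuous real functions on $\mathbb{R}^{+}=[0,\infty)$. For $x_{0}\in\mathbb{R}^{n}$, $\delta_{x_{0}}$ is the distribution $\delta_{x_{0}}(\phi)=\phi(x_{0})$ on $C(\mathbb{R}^{n})$. For a function $\phi\in C(\mathbb{R}^n)$ and a point $y\in\mathbb{R}^{n}$, the spherical mean transform (SMT) is $R_{y}\phi(t) = t^{n-1}\int_{|\theta|=1}\phi(y+t\theta)\,d\theta$, $t\geq 0$; its dual is $R_{y}^{\ast}\Lambda(z)=\Lambda(|y-z|)$ for $\Lambda\in C(\mathbb{R}^{+})$. For a distribution $T:C(\mathbb{R}^{n})\to\mathbb{R}$, the SMT of $T$ at $y$ is the map $R_{y}T:C(\mathbb{R}^{+})\to\mathbb{R}$,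 $(R_{y}T)(\Lambda)=T(\Lambda(|y-\cdot|))$. "The SMT of $f$ is given at a point $y$" means $R_{y}f$ is known. *)

theory Defs
  imports "HOL-Analysis.Analysis"
begin

text \<open>A distribution on C(R^n) is modelled as a real-valued functional on functions
  'a \<Rightarrow> real (only its values on continuous functions matter).\<close>
definition dirac_comb :: "nat \<Rightarrow> (nat \<Rightarrow> real) \<Rightarrow> (nat \<Rightarrow> 'a) \<Rightarrow> (('a \<Rightarrow> real) \<Rightarrow> real)" where
  "dirac_comb m a x = (\<lambda>\<phi>. \<Sum>k\<in>{1..m}. a k * \<phi> (x k))"

definition SMT :: "'a::metric_space \<Rightarrow> (('a \<Rightarrow> real) \<Rightarrow> real) \<Rightarrow> ((real \<Rightarrow> real) \<Rightarrow> real)" where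
  "SMT y T = (\<lambda>\<Lambda>. T (\<lambda>z. \<Lambda> (dist y z)))"

definition SMT_agree :: "'a::metric_space \<Rightarrow> (('a \<Rightarrow> real) \<Rightarrow> real) \<Rightarrow> (('a \<Rightarrow> real) \<Rightarrow> real) \<Rightarrow> bool" where
  "SMT_agree y T S \<longleftrightarrow> (\<forall>\<Lambda>. continuous_on {0..} \<Lambda> \<longrightarrow> SMT y T \<Lambda> = SMT y S \<Lambda>)"

definition admissible :: "nat \<Rightarrow> (nat \<Rightarrow> real) \<Rightarrow> (nat \<Rightarrow> 'a) \<Rightarrow> bool" where
  "admissible m a x \<longleftrightarrow> inj_on x {1..m} \<and> inj_on a {1..m} \<and> (\<forall>k\<in>{1..m}. a k \<noteq> 0)"

definition no_hyperplane_more_than :: "nat \<Rightarrow> ('a::euclidean_space) set \<Rightarrow> bool" where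
  "no_hyperplane_more_than n P \<longleftrightarrow> (\<forall>w c. w \<noteq> 0 \<longrightarrow> card {p\<in>P. w \<bullet> p = c} \<le> n)"

end

theory Submission imports Defs begin

lemma bisector: fixes u v p :: "real^'n" assumes "dist p u = dist p v"
  shows "(v - u) \<bullet> p = (v \<bullet> v - u \<bullet> u)/2"
proof -
  have "(p - u) \<bullet> (p - u) = (p - v) \<bullet> (p - v)"
    using assms by (simp add: dist_norm dot_square_norm)
  then show ?thesis by (simp add: inner_diff_left inner_diff_right inner_commute algebra_simps)
qed

lemma smt_atoms:
  fixes y :: "'a::metric_space"
  assumes "SMT_agree y (dirac_comb m a x) (dirac_comb m b z)"
  shows "(\<Sum>k\<in>{k\<in>{1..m}. dist y (x k) = r}. a k) = (\<Sum>k\<in>{k\<in>{1..m}. dist y (z k) = r}. b k)"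
proof -
  define D where "D = (\<lambda>k. dist y (x k)) ` {1..m} \<union> (\<lambda>k. dist y (z k)) ` {1..m}"
  have fD: "finite D" unfolding D_def by auto
  define L where "L = (\<lambda>t::real. \<Prod>s\<in>D-{r}. (t - s) / (r - s))"
  have cont: "continuous_on {0..} L" unfolding L_def by (intro continuous_intros) auto
  have Lval: "L t = (if t = r then 1 else 0)" if "t \<in> D" for t
  proof (cases "t = r")
    case True then show ?thesis unfolding L_def by (simp add: prod.neutral)
  next
    case False
    then have "t \<in> D - {r}" using that by auto
    then have "\<exists>s\<in>D-{r}. (t - s) / (r - s) = 0" by auto
    then show ?thesis unfolding L_def using fD False by (simp add: prod_zero_iff)
  qed
  have "SMT y (dirac_comb m a x) L = SMT y (dirac_comb m b z) L"
    using assms cont unfolding SMT_agree_def by blast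
  then have "(\<Sum>k\<in>{1..m}. a k * L (dist y (x k))) = (\<Sum>k\<in>{1..m}. b k * L (dist y (z k)))"
    unfolding SMT_def dirac_comb_def by simp
  moreover have "(\<Sum>k\<in>{1..m}. a k * L (dist y (x k))) = (\<Sum>k\<in>{1..m}. if dist y (x k) = r then a k else 0)"
  proof (rule sum.cong)
    fix k assume "k \<in> {1..m}"
    then have "dist y (x k) \<in> D" unfolding D_def by blast
    then show "a k * L (dist y (x k)) = (if dist y (x k) = r then a k else 0)"
      using Lval by simp
  qed simp
  moreover have "(\<Sum>k\<in>{1..m}. b k * L (dist y (z k))) = (\<Sum>k\<in>{1..m}. if dist y (z k) = r then b k else 0)"
  proof (rule sum.cong)
    fix k assume "k \<in> {1..m}"
    then have "dist y (z k) \<in> D" unfolding D_def by blast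
    then show "b k * L (dist y (z k)) = (if dist y (z k) = r then b k else 0)"
      using Lval by simp
  qed simp
  moreover have "(\<Sum>k\<in>{k\<in>{1..m}. dist y (x k) = r}. a k) = (\<Sum>k\<in>{1..m}. if dist y (x k) = r then a k else 0)"
    by (rule sum.inter_filter) simp
  moreover have "(\<Sum>k\<in>{k\<in>{1..m}. dist y (z k) = r}. b k) = (\<Sum>k\<in>{1..m}. if dist y (z k) = r then b k else 0)"
    by (rule sum.inter_filter) simp
  ultimately show ?thesis by linarith
qed

lemma key_sub:
  fixes m :: nat and P :: "(real ^ 'n) set"
    and a b :: "nat \<Rightarrow> real" and x z :: "nat \<Rightarrow> real ^ 'n"
  assumes fP: "finite P"
    and cP: "card P = CARD('n) * (m choose 2) + CARD('n) + 1"
    and nh: "no_hyperplane_more_than CARD('n) P"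
    and ax: "admissible m a x" and bz: "admissible m b z"
    and ag: "\<forall>y\<in>P. SMT_agree y (dirac_comb m a x) (dirac_comb m b z)"
  shows "(\<lambda>k. (x k, a k)) ` {1..m} \<subseteq> (\<lambda>k. (z k, b k)) ` {1..m}"
proof -
  let ?n = "CARD('n)"
  have injx: "inj_on x {1..m}" and inja: "inj_on a {1..m}" and anz: "\<forall>k\<in>{1..m}. a k \<noteq> 0"
    using ax unfolding admissible_def by auto
  have injb: "inj_on b {1..m}"
    using bz unfolding admissible_def by auto
  have hyp: "card {p\<in>P. w \<bullet> p = c} \<le> ?n" if "w \<noteq> 0" for w c
    using nh that unfolding no_hyperplane_more_than_def by blast
  have atoms: "(\<Sum>k\<in>{k\<in>{1..m}. dist y (x k) = r}. a k) = (\<Sum>k\<in>{k\<in>{1..m}. dist y (z k) = r}. b k)"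
    if "y \<in> P" for y r
    using ag that by (intro smt_atoms) blast
  define Good where "Good = {y\<in>P. inj_on (\<lambda>k. dist y (x k)) {1..m}}"
  have singl: "{j\<in>{1..m}. f j = f k} = {k}" if "inj_on f {1..m}" "k \<in> {1..m}" for f :: "nat \<Rightarrow> real" and k
  proof (rule set_eqI)
    fix j
    show "j \<in> {j\<in>{1..m}. f j = f k} \<longleftrightarrow> j \<in> {k}"
      using that inj_on_eq_iff[OF that(1), of j k] by auto
  qed
  have goodz: "inj_on (\<lambda>k. dist y (z k)) {1..m}" if yG: "y \<in> Good" for y
  proof -
    have yP: "y \<in> P" and ij: "inj_on (\<lambda>k. dist y (x k)) {1..m}" using yG unfolding Good_def by auto
    define R where "R = (\<lambda>k. dist y (x k)) ` {1..m}"
    define S where "S = (\<lambda>k. dist y (z k)) ` {1..m}"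
    have cR: "card R = m" unfolding R_def using card_image[OF ij] by simp
    have "R \<subseteq> S"
    proof
      fix r assume "r \<in> R"
      then obtain k where k: "k \<in> {1..m}" "r = dist y (x k)" unfolding R_def by auto
      have "(\<Sum>j\<in>{j\<in>{1..m}. dist y (x j) = r}. a j) = a k"
        using singl[OF ij k(1)] k(2) by simp
      then have "(\<Sum>j\<in>{j\<in>{1..m}. dist y (z j) = r}. b j) = a k"
        using atoms[OF yP, of r] by simp
      then have "(\<Sum>j\<in>{j\<in>{1..m}. dist y (z j) = r}. b j) \<noteq> 0"
        using anz k(1) by simp
      then have "{j\<in>{1..m}. dist y (z j) = r} \<noteq> {}" by (metis sum.empty)
      then show "r \<in> S" unfolding S_def by auto
    qed
    moreover have "card S \<le> m" unfolding S_def using card_image_le[of "{1..m}"] by simp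
    ultimately have "card S = card {1..m}"
      using cR card_mono[of S R] unfolding S_def by simp
    then show ?thesis using inj_on_iff_eq_card[of "{1..m}" "\<lambda>k. dist y (z k)"] unfolding S_def by simp
  qed
  have match: "\<exists>j\<in>{1..m}. b j = a k \<and> dist y (x k) = dist y (z j)" if yG: "y \<in> Good" and k: "k \<in> {1..m}" for y k
  proof -
    have yP: "y \<in> P" and ij: "inj_on (\<lambda>k. dist y (x k)) {1..m}" using yG unfolding Good_def by auto
    define r where "r = dist y (x k)"
    have "(\<Sum>j\<in>{j\<in>{1..m}. dist y (x j) = r}. a j) = a k"
      using singl[OF ij k] r_def by simp
    then have e: "(\<Sum>j\<in>{j\<in>{1..m}. dist y (z j) = r}. b j) = a k"
      using atoms[OF yP, of r] by simp
    then have "{j\<in>{1..m}. dist y (z j) = r} \<noteq> {}" using anz k by (metis sum.empty)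
    then obtain j where j: "j \<in> {1..m}" "dist y (z j) = r" by auto
    have "{j'\<in>{1..m}. dist y (z j') = r} = {j}"
      using singl[OF goodz[OF yG] j(1)] j(2) by simp
    then have "b j = a k" using e by simp
    then show ?thesis using j r_def by auto
  qed
  define Pr where "Pr = {B. B \<subseteq> {1..m} \<and> card B = 2}"
  define H where "H = (\<lambda>B. {p\<in>P. dist p (x (Min B)) = dist p (x (Max B))})"
  have fPr: "finite Pr" unfolding Pr_def by (rule finite_subset[of _ "Pow {1..m}"]) auto
  have cPr: "card Pr = m choose 2" unfolding Pr_def using n_subsets[of "{1..m}" 2] by simp
  have cH: "card (H B) \<le> ?n" if "B \<in> Pr" for B
  proof -
    have B: "B \<subseteq> {1..m}" "card B = 2" using that unfolding Pr_def by auto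
    then obtain i j where ij: "B = {i,j}" "i \<noteq> j" by (meson card_2_iff)
    have ijm: "i \<in> {1..m}" "j \<in> {1..m}" using B(1) ij(1) by auto
    have mn: "Min B = min i j" "Max B = max i j" using ij(1) by auto
    have mm: "min i j \<in> {1..m}" "max i j \<in> {1..m}" "min i j \<noteq> max i j"
      using ijm ij(2) by (auto simp: min_def max_def)
    have "x (max i j) \<noteq> x (min i j)"
      using inj_on_eq_iff[OF injx mm(2) mm(1)] mm(3) by simp
    then have nz: "x (Max B) - x (Min B) \<noteq> 0" unfolding mn by simp
    have sub: "H B \<subseteq> {p\<in>P. (x (Max B) - x (Min B)) \<bullet> p = (x (Max B) \<bullet> x (Max B) - x (Min B) \<bullet> x (Min B))/2}"
      unfolding H_def using bisector by blast
    have "card (H B) \<le> card {p\<in>P. (x (Max B) - x (Min B)) \<bullet> p = (x (Max B) \<bullet> x (Max B) - x (Min B) \<bullet> x (Min B))/2}"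
      using sub by (rule card_mono[rotated]) (simp add: fP)
    then show ?thesis by (rule le_trans) (rule hyp[OF nz])
  qed
  have bad: "P - Good \<subseteq> (\<Union>B\<in>Pr. H B)"
  proof
    fix y assume y: "y \<in> P - Good"
    then obtain i j where ij: "i \<in> {1..m}" "j \<in> {1..m}" "i < j" "dist y (x i) = dist y (x j)"
    proof -
      obtain i j where "i \<in> {1..m}" "j \<in> {1..m}" "i \<noteq> j" "dist y (x i) = dist y (x j)"
        using y unfolding Good_def inj_on_def by auto
      then show ?thesis using that[of i j] that[of j i] by (cases "i < j") auto
    qed
    have "{i,j} \<in> Pr" unfolding Pr_def using ij by auto
    moreover have "y \<in> H {i,j}" unfolding H_def using ij y by (simp add: dist_commute min_def max_def)
    ultimately show "y \<in> (\<Union>B\<in>Pr. H B)" by blast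
  qed
  have "card (P - Good) \<le> card (\<Union>B\<in>Pr. H B)"
    by (rule card_mono[OF _ bad]) (auto simp: H_def fP fPr)
  also have "\<dots> \<le> (\<Sum>B\<in>Pr. card (H B))" by (rule card_UN_le[OF fPr])
  also have "\<dots> \<le> (\<Sum>B\<in>Pr. ?n)" by (rule sum_mono) (rule cH)
  also have "\<dots> = ?n * (m choose 2)" using cPr by simp
  finally have cbad: "card (P - Good) \<le> ?n * (m choose 2)" .
  have GP: "Good \<subseteq> P" unfolding Good_def by auto
  have "card P = card Good + card (P - Good)"
    using card_Diff_subset[OF finite_subset[OF GP fP] GP] card_mono[OF fP GP] by simp
  then have cG: "card Good \<ge> ?n + 1" using cbad cP by simp
  have fG: "finite Good" using finite_subset[OF GP fP] .
  show ?thesis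
  proof
    fix q assume "q \<in> (\<lambda>k. (x k, a k)) ` {1..m}"
    then obtain k where k: "k \<in> {1..m}" "q = (x k, a k)" by auto
    have "Good \<noteq> {}" using cG by auto
    then obtain y0 where y0: "y0 \<in> Good" by auto
    obtain j where j: "j \<in> {1..m}" "b j = a k" using match[OF y0 k(1)] by auto
    have allG: "dist y (x k) = dist y (z j)" if yG': "y \<in> Good" for y
    proof -
      obtain j' where j': "j' \<in> {1..m}" "b j' = a k" "dist y (x k) = dist y (z j')"
        using match[OF yG' k(1)] by auto
      have "j' = j" using inj_on_eq_iff[OF injb j'(1) j(1)] j(2) j'(2) by simp
      then show ?thesis using j' by simp
    qed
    have "x k = z j"
    proof (rule ccontr)
      assume ne: "x k \<noteq> z j"
      have "Good \<subseteq> {p\<in>P. (z j - x k) \<bullet> p = (z j \<bullet> z j - x k \<bullet> x k)/2}"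
      proof
        fix p assume pG: "p \<in> Good"
        then have "dist p (x k) = dist p (z j)" using allG by (simp add: dist_commute)
        then have "(z j - x k) \<bullet> p = (z j \<bullet> z j - x k \<bullet> x k)/2" by (rule bisector)
        then show "p \<in> {p\<in>P. (z j - x k) \<bullet> p = (z j \<bullet> z j - x k \<bullet> x k)/2}" using pG GP by auto
      qed
      then have "card Good \<le> card {p\<in>P. (z j - x k) \<bullet> p = (z j \<bullet> z j - x k \<bullet> x k)/2}"
        by (rule card_mono[rotated]) (simp add: fP)
      moreover have nz: "z j - x k \<noteq> 0" using ne by simp
      ultimately have "card Good \<le> ?n"
        by (rule le_trans[OF _ hyp])
      then show False using cG by simp
    qed
    then show "q \<in> (\<lambda>k. (z k, b k)) ` {1..m}" using k j by auto
  qed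
qed

theorem theorem3p1:
  fixes m :: nat and P :: "(real ^ 'n) set"
    and a b :: "nat \<Rightarrow> real" and x z :: "nat \<Rightarrow> real ^ 'n"
  assumes "m \<ge> 1"
    and "finite P"
    and "card P = (CARD('n) * m * (m - 1) + 2 * CARD('n) + 2) div 2"
    and "no_hyperplane_more_than CARD('n) P"
    and "admissible m a x" and "admissible m b z"
    and "\<forall>y\<in>P. SMT_agree y (dirac_comb m a x) (dirac_comb m b z)"
  shows "(\<lambda>k. (x k, a k)) ` {1..m} = (\<lambda>k. (z k, b k)) ` {1..m}"
proof -
  have ev: "even (m * (m - 1))" by (cases "even m") auto
  have h: "CARD('n) * m * (m - 1) = 2 * (CARD('n) * (m choose 2))"
    using ev by (simp add: choose_two mult.assoc)
  have "(CARD('n) * m * (m - 1) + 2 * CARD('n) + 2) div 2 = CARD('n) * (m choose 2) + CARD('n) + 1"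
    unfolding h by simp
  then have cP: "card P = CARD('n) * (m choose 2) + CARD('n) + 1"
    using assms(3) by simp
  have ag2: "\<forall>y\<in>P. SMT_agree y (dirac_comb m b z) (dirac_comb m a x)"
    using assms(7) unfolding SMT_agree_def by metis
  show ?thesis
    using key_sub[OF assms(2) cP assms(4) assms(5) assms(6) assms(7)]
      key_sub[OF assms(2) cP assms(4) assms(6) assms(5) ag2] by (rule subset_antisym)
qed

end
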